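(* For every integer $i\ge 2$, $\overline{\alpha}(\{1,3,2i\})=\frac{i}{2i+3}$.
   Context: For a finite set $S$ of positive integers, the distance graph $G(S)$ has vertex set $\mathbb{Z}$, with $i,j$ adjacent iff $|i-j|\in S$. The density of $A\subseteq\mathbb{Z}$ is $\delta(A)=\limsup_{N\to\infty}\frac{|A\cap[-N,N]|}{2N+1}$, and the independence ratio $\overline{\alpha}(S)$ is the supremum of $\delta(A)$ over independent sets $A$ of $G(S)$. *)

theory Defs
  imports "HOL-Analysis.Analysis"
begin

definition dist_adj :: "nat set \<Rightarrow> int \<Rightarrow> int \<Rightarrow> bool" where
  "dist_adj S i j \<longleftrightarrow> nat \<bar>i - j\<bar> \<in> S"

definition dist_independent :: "nat set \<Rightarrow> int set \<Rightarrow> bool" where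
  "dist_independent S A \<longleftrightarrow> (\<forall>i\<in>A. \<forall>j\<in>A. \<not> dist_adj S i j)"

definition upper_density :: "int set \<Rightarrow> ereal" where
  "upper_density A = limsup (\<lambda>N::nat. ereal (real (card (A \<inter> {- int N .. int N})) / real (2 * N + 1)))"

definition independence_ratio :: "nat set \<Rightarrow> ereal" where
  "independence_ratio S = (SUP A \<in> {A. dist_independent S A}. upper_density A)"

end

theory Submission
  imports Defs "HOL-Real_Asymp.Real_Asymp"
begin

lemma indep_diff:
  assumes "dist_independent {1, 3, 2 * i} A" "x \<in> A" "y \<in> A"
  shows "y - x \<noteq> 1 \<and> y - x \<noteq> 3 \<and> y - x \<noteq> 2 * int i"
proof -
  have "nat \<bar>x - y\<bar> \<notin> {1, 3, 2 * i}"
    using assms unfolding dist_independent_def dist_adj_def by blast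
  then show ?thesis by (auto simp: nat_eq_iff)
qed

lemma remove_max:
  fixes B :: "int set"
  assumes "finite B" "2 \<le> card B"
  shows "B - {Max B} \<noteq> {} \<and> Min (B - {Max B}) = Min B \<and> Max (B - {Max B}) \<in> B
     \<and> Max (B - {Max B}) < Max B \<and> card (B - {Max B}) = card B - 1"
proof -
  have ne: "B \<noteq> {}" using assms by auto
  have MB: "Max B \<in> B" using assms ne by simp
  have cB': "card (B - {Max B}) = card B - 1" using MB assms by simp
  have ne': "B - {Max B} \<noteq> {}"
  proof
    assume "B - {Max B} = {}"
    then have "card B - 1 = 0" using cB' by (metis card.empty)
    then show False using assms by simp
  qed
  have fin': "finite (B - {Max B})" using assms by simp
  have "Min B \<noteq> Max B"
  proof
    assume h: "Min B = Max B"
    have "B \<subseteq> {Max B}"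
    proof
      fix x assume "x \<in> B"
      then have "Min B \<le> x" "x \<le> Max B" using assms by auto
      then show "x \<in> {Max B}" using h by simp
    qed
    then have "card B \<le> card {Max B}" by (intro card_mono) simp_all
    then have "card B \<le> 1" by simp
    then show False using assms by simp
  qed
  then have minin: "Min B \<in> B - {Max B}" using assms ne by simp
  have m1: "Min (B - {Max B}) = Min B"
  proof (rule antisym)
    show "Min (B - {Max B}) \<le> Min B" using minin fin' by simp
    show "Min B \<le> Min (B - {Max B})" using ne' fin' assms Min_in[OF fin' ne'] by simp
  qed
  have m2: "Max (B - {Max B}) \<in> B" using Max_in[OF fin' ne'] by simp
  have "Max (B - {Max B}) \<noteq> Max B" using Max_in[OF fin' ne'] by simp
  moreover have "Max (B - {Max B}) \<le> Max B" using m2 assms by simp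
  ultimately show ?thesis using ne' m1 m2 cB' by simp
qed

lemma prog:
  fixes B :: "int set"
  assumes "finite B" "card B = Suc m" "\<forall>x\<in>B. \<forall>y\<in>B. y - x \<noteq> 1 \<and> y - x \<noteq> 3"
  shows "Max B - Min B \<ge> 2 * int m \<and>
     (Max B - Min B < 2 * int m + 2 \<longrightarrow> B = (\<lambda>k. Min B + 2 * int k) ` {..m})"
  using assms
proof (induction m arbitrary: B)
  case 0
  then obtain b where "B = {b}" by (metis card_1_singletonE One_nat_def)
  then show ?case by auto
next
  case (Suc m)
  define B' where "B' = B - {Max B}"
  have R: "B' \<noteq> {} \<and> Min B' = Min B \<and> Max B' \<in> B \<and> Max B' < Max B \<and> card B' = card B - 1"
    using remove_max[of B] Suc.prems unfolding B'_def by simp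
  have fB': "finite B'" using Suc.prems B'_def by simp
  have cB': "card B' = Suc m" using R Suc.prems by simp
  have hB': "\<forall>x\<in>B'. \<forall>y\<in>B'. y - x \<noteq> 1 \<and> y - x \<noteq> 3" using Suc.prems(3) B'_def by auto
  note IH = Suc.IH[OF fB' cB' hB']
  have MB: "Max B \<in> B" using Suc.prems by (metis Max_in card.empty nat.distinct(1))
  have d: "Max B - Max B' \<noteq> 1 \<and> Max B - Max B' \<noteq> 3" using Suc.prems(3) MB R by blast
  have "Max B - Max B' \<ge> 2" using d R by linarith
  then have g1: "Max B - Min B \<ge> 2 * int (Suc m)" using IH R by simp
  moreover have "Max B - Min B < 2 * int (Suc m) + 2 \<longrightarrow> B = (\<lambda>k. Min B + 2 * int k) ` {..Suc m}"
  proof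
    assume lt: "Max B - Min B < 2 * int (Suc m) + 2"
    have e2: "Max B - Max B' = 2"
    proof (rule ccontr)
      assume "Max B - Max B' \<noteq> 2"
      then have "Max B - Max B' \<ge> 4" using d \<open>Max B - Max B' \<ge> 2\<close> by linarith
      then show False using IH R lt by simp
    qed
    then have "Max B' - Min B' < 2 * int m + 2" using lt R by simp
    then have eqB': "B' = (\<lambda>k. Min B + 2 * int k) ` {..m}" using IH R by simp
    have "Max B' \<in> B'" using R fB' by simp
    then have "Max B' \<in> (\<lambda>k. Min B + 2 * int k) ` {..m}" using eqB' by simp
    then obtain k where k: "k \<le> m" "Max B' = Min B + 2 * int k" by blast
    have "Max B' \<ge> Min B + 2 * int m" using IH R by simp
    then have "Max B' = Min B + 2 * int m" using k by simp
    have "Max B = Min B + 2 * int (Suc m)" using e2 \<open>Max B' = Min B + 2 * int m\<close> by simp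
    have "B = insert (Max B) B'" using MB B'_def by auto
    also have "Max B = Min B + 2 * int (Suc m)" by fact
    finally show "B = (\<lambda>k. Min B + 2 * int k) ` {..Suc m}"
      using eqB' by (simp add: atMost_Suc)
  qed
  ultimately show ?case by blast
qed



lemma window:
  assumes i2: "i \<ge> 2" and ind: "dist_independent {1, 3, 2 * i} A"
  shows "card (A \<inter> {a..a + 2 * int i + 2}) \<le> i"
proof (rule ccontr)
  assume "\<not> ?thesis"
  then have "Suc i \<le> card (A \<inter> {a..a + 2 * int i + 2})" by simp
  then obtain C where C: "C \<subseteq> A \<inter> {a..a + 2 * int i + 2}" "card C = Suc i" "finite C"
    by (rule obtain_subset_with_card_n)
  have neC: "C \<noteq> {}" using C by auto
  have dC: "\<forall>x\<in>C. \<forall>y\<in>C. y - x \<noteq> 1 \<and> y - x \<noteq> 3 \<and> y - x \<noteq> 2 * int i"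
    using indep_diff[OF ind] C(1) by blast
  then have dC13: "\<forall>x\<in>C. \<forall>y\<in>C. y - x \<noteq> 1 \<and> y - x \<noteq> 3" by blast
  have MaxC: "Max C \<in> C" and MinC: "Min C \<in> C" using C neC by auto
  have "Max C \<le> a + 2 * int i + 2" "a \<le> Min C" using MaxC MinC C(1) by auto
  then have span: "Max C - Min C \<le> 2 * int i + 2" by linarith
  note P = prog[OF C(3) C(2) dC13]
  show False
  proof (cases "Max C - Min C < 2 * int i + 2")
    case True
    then have eq: "C = (\<lambda>k. Min C + 2 * int k) ` {..i}" using P by blast
    have "Min C + 2 * int i \<in> C" by (subst eq) auto
    then show False using dC MinC by force
  next
    case False
    then have sp: "Max C - Min C = 2 * int i + 2" using span by simp
    define C' where "C' = C - {Max C}"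
    have R: "C' \<noteq> {} \<and> Min C' = Min C \<and> Max C' \<in> C \<and> Max C' < Max C \<and> card C' = card C - 1"
      using remove_max[of C] C i2 unfolding C'_def by simp
    have fC': "finite C'" using C C'_def by simp
    have cC': "card C' = Suc (i - 1)" using R C i2 by simp
    have dC': "\<forall>x\<in>C'. \<forall>y\<in>C'. y - x \<noteq> 1 \<and> y - x \<noteq> 3" using dC13 C'_def by auto
    note P' = prog[OF fC' cC' dC']
    have ii: "int (i - 1) = int i - 1" using i2 by simp
    have MC': "Max C' \<in> C'" using R fC' by simp
    have d: "Max C - Max C' \<noteq> 1 \<and> Max C - Max C' \<noteq> 3 \<and> Max C - Max C' \<noteq> 2 * int i"
      using dC MaxC R by blast
    show False
    proof (cases "Max C - Max C' = 2")
      case True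
      then have "Max C' - Min C = 2 * int i" using sp by simp
      then show False using dC MinC R by force
    next
      case False
      then have "Max C - Max C' \<ge> 4" using d R by linarith
      then have "Max C' - Min C' < 2 * int (i - 1) + 2" using sp R ii by simp
      then have eq: "C' = (\<lambda>k. Min C' + 2 * int k) ` {..i - 1}" using P' by blast
      have "Min C' + 2 * int 1 \<in> C'" by (subst eq, rule imageI) (use i2 in simp)
      then have "Min C + 2 \<in> C" using R C'_def by auto
      moreover have "Max C - (Min C + 2) = 2 * int i" using sp by simp
      ultimately show False using dC MaxC by blast
    qed
  qed
qed


lemma count_upper:
  assumes i2: "i \<ge> 2" and ind: "dist_independent {1, 3, 2 * i} A"
  shows "real (card (A \<inter> {- int N..int N})) \<le> real i * (real (2 * N + 1) / real (2 * i + 3) + 1)"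
proof -
  define p where "p = 2 * i + 3"
  define q where "q = (2 * N + 1) div p + 1"
  define W where "W k = {- int N + int p * int k .. - int N + int p * int k + 2 * int i + 2}" for k
  have pp: "int p > 0" unfolding p_def by simp
  have sub: "A \<inter> {- int N..int N} \<subseteq> (\<Union>k\<in>{..<q}. A \<inter> W k)"
  proof
    fix x assume x: "x \<in> A \<inter> {- int N..int N}"
    define k where "k = nat ((x + int N) div int p)"
    have nn: "(x + int N) div int p \<ge> 0" using x pp by (simp add: pos_imp_zdiv_nonneg_iff)
    have le: "(x + int N) div int p \<le> int (2 * N + 1) div int p"
      by (rule zdiv_mono1) (use x pp in auto)
    have "int ((2 * N + 1) div p) = int (2 * N + 1) div int p" by (simp add: zdiv_int)
    then have kq: "k < q" using le nn unfolding k_def q_def by linarith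
    define qq where "qq = (x + int N) div int p"
    define r where "r = (x + int N) mod int p"
    have dm: "x + int N = int p * qq + r" unfolding qq_def r_def by simp
    have "0 \<le> r" "r < int p" using pp unfolding r_def by auto
    moreover have "int k = qq" using nn unfolding k_def qq_def by simp
    moreover have "int p = 2 * int i + 3" unfolding p_def by simp
    ultimately have "x \<in> W k" using dm unfolding W_def by simp
    then show "x \<in> (\<Union>k\<in>{..<q}. A \<inter> W k)" using x kq by auto
  qed
  have "card (A \<inter> {- int N..int N}) \<le> card (\<Union>k\<in>{..<q}. A \<inter> W k)"
    by (rule card_mono[OF _ sub]) (auto simp: W_def)
  also have "\<dots> \<le> (\<Sum>k<q. card (A \<inter> W k))" by (rule card_UN_le) simp
  also have "\<dots> \<le> q * i"
  proof -
    have "\<And>k. card (A \<inter> W k) \<le> i" unfolding W_def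
      using window[OF i2 ind] by (simp add: add.assoc)
    then have "(\<Sum>k<q. card (A \<inter> W k)) \<le> (\<Sum>k<q. i)" by (intro sum_mono) auto
    then show ?thesis by simp
  qed
  finally have c: "real (card (A \<inter> {- int N..int N})) \<le> real q * real i"
    by (metis of_nat_le_iff of_nat_mult)
  have "real q \<le> real (2 * N + 1) / real p + 1"
    unfolding q_def using of_nat_div_le_of_nat[of "2*N+1" p, where ?'a=real] by simp
  then have "real q * real i \<le> (real (2 * N + 1) / real p + 1) * real i"
    by (intro mult_right_mono) auto
  then show ?thesis using c unfolding p_def by (simp add: mult.commute)
qed

lemma arith_core:
  fixes i j j' d v :: int
  assumes "0 \<le> j" "j < i" "0 \<le> j'" "j' < i"
    and v: "v = (2 * i + 3) * d + 2 * j - 2 * j'"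
  shows "v \<noteq> 1 \<and> v \<noteq> -1 \<and> v \<noteq> 3 \<and> v \<noteq> -3 \<and> v \<noteq> 2 * i \<and> v \<noteq> - 2 * i"
proof -
  define w where "w = (2 * i + 3) * d"
  have vw: "v = w + 2 * j - 2 * j'" using v w_def by simp
  consider "d = 0" | "d = 1" | "d = -1" | "d \<ge> 2" | "d \<le> -2" by linarith
  then show ?thesis
  proof cases
    case 1 then show ?thesis using assms by presburger
  next
    case 2 then show ?thesis using assms by presburger
  next
    case 3 then show ?thesis using assms by presburger
  next
    case 4
    then have "(2 * i + 3) * 2 \<le> (2 * i + 3) * d" using assms by (intro mult_left_mono) auto
    then have "4 * i + 6 \<le> w" unfolding w_def by simp
    then show ?thesis using assms(1-4) vw by (intro conjI; linarith)
  next
    case 5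
    then have "(2 * i + 3) * d \<le> (2 * i + 3) * (-2)" using assms by (intro mult_left_mono) auto
    then have "w \<le> - 4 * i - 6" unfolding w_def by simp
    then show ?thesis using assms(1-4) vw by (intro conjI; linarith)
  qed
qed

definition Aset :: "nat \<Rightarrow> int set" where
  "Aset i = {x. \<exists>k j. j < i \<and> x = int (2 * i + 3) * k + 2 * int j}"

lemma Aset_indep: "dist_independent {1, 3, 2 * i} (Aset i)"
  unfolding dist_independent_def dist_adj_def
proof (intro ballI notI)
  fix x y assume x: "x \<in> Aset i" and y: "y \<in> Aset i" and h: "nat \<bar>x - y\<bar> \<in> {1, 3, 2 * i}"
  obtain k j where kj: "j < i" "x = int (2 * i + 3) * k + 2 * int j" using x unfolding Aset_def by auto
  obtain k' j' where kj': "j' < i" "y = int (2 * i + 3) * k' + 2 * int j'" using y unfolding Aset_def by auto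
  have v: "x - y = (2 * int i + 3) * (k - k') + 2 * int j - 2 * int j'"
    using kj kj' by (simp add: algebra_simps)
  have "x - y \<in> {1, -1, 3, -3, 2 * int i, - 2 * int i}" using h by (auto simp: nat_eq_iff abs_if split: if_splits)
  then show False using arith_core[of "int j" "int i" "int j'" "x - y" "k - k'"] v kj kj' by auto
qed

lemma count_lower:
  assumes i2: "i \<ge> 2"
  shows "real (card (Aset i \<inter> {- int N..int N})) \<ge> 2 * real i * (real N - real (2 * i + 3) + 1) / real (2 * i + 3)"
proof -
  define p where "p = 2 * i + 3"
  define m where "m = N div p"
  define K where "K = {- int m..<int m}"
  define f where "f = (\<lambda>(k::int, j::nat). int p * k + 2 * int j)"
  have pp: "int p > 0" unfolding p_def by simp
  have pm: "int p * int m \<le> int N" unfolding m_def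
    by (metis of_nat_le_iff of_nat_mult times_div_less_eq_dividend)
  have inj: "inj_on f (K \<times> {..<i})"
  proof (rule inj_onI)
    fix a b assume a: "a \<in> K \<times> {..<i}" and b: "b \<in> K \<times> {..<i}" and e: "f a = f b"
    obtain k j where ak: "a = (k, j)" "j < i" using a by auto
    obtain k' j' where bk: "b = (k', j')" "j' < i" using b by auto
    have r1: "(2 * int j + int p * k) div int p = k"
      using pp ak unfolding p_def by (simp add: div_pos_pos_trivial)
    have r2: "(2 * int j' + int p * k') div int p = k'"
      using pp bk unfolding p_def by (simp add: div_pos_pos_trivial)
    have "int p * k + 2 * int j = int p * k' + 2 * int j'" using e ak bk unfolding f_def by simp
    then have "k = k'" using r1 r2 by (simp add: add.commute)
    then show "a = b" using ak bk \<open>int p * k + 2 * int j = int p * k' + 2 * int j'\<close> by simp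
  qed
  have img: "f ` (K \<times> {..<i}) \<subseteq> Aset i \<inter> {- int N..int N}"
  proof
    fix x assume "x \<in> f ` (K \<times> {..<i})"
    then obtain k j where k: "k \<in> K" "j < i" "x = int p * k + 2 * int j" unfolding f_def by auto
    have "x \<in> Aset i" using k unfolding Aset_def p_def by auto
    moreover have "int p * k \<ge> int p * (- int m)" using k pp unfolding K_def by (intro mult_left_mono) auto
    moreover have "int p * k \<le> int p * (int m - 1)" using k pp unfolding K_def by (intro mult_left_mono) auto
    ultimately show "x \<in> Aset i \<inter> {- int N..int N}" using k pm unfolding p_def
      by (auto simp: algebra_simps)
  qed
  have "card (K \<times> {..<i}) \<le> card (Aset i \<inter> {- int N..int N})"
    by (rule card_inj_on_le[OF inj img]) simp
  moreover have "card (K \<times> {..<i}) = 2 * m * i" unfolding K_def by (simp add: card_cartesian_product nat_mult_distrib)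
  ultimately have c: "real (2 * m * i) \<le> real (card (Aset i \<inter> {- int N..int N}))" by (simp only: of_nat_le_iff)
  have e: "real N = real p * real m + real (N mod p)" using mult_div_mod_eq[of p N] unfolding m_def
    by (metis of_nat_add of_nat_mult)
  have "N mod p + 1 \<le> p" using mod_less_divisor[of p N] p_def by linarith
  then have "real (N mod p + 1) \<le> real p" by (simp only: of_nat_le_iff)
  then have "real N \<le> real p * real m + real p - 1" using e by simp
  then have "real N - real p + 1 \<le> real p * real m" by simp
  then have "(real N - real p + 1) / real p \<le> real m" using pp by (simp add: divide_le_eq mult.commute)
  then have "2 * real i * ((real N - real p + 1) / real p) \<le> 2 * real i * real m"
    by (intro mult_left_mono) auto
  then show ?thesis using c unfolding p_def by (simp add: mult.commute mult.left_commute)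
qed

lemma density_upper:
  assumes i2: "i \<ge> 2" and ind: "dist_independent {1, 3, 2 * i} A"
  shows "upper_density A \<le> ereal (real i / real (2 * i + 3))"
proof -
  define c where "c = real i / real (2 * i + 3)"
  have le: "real (card (A \<inter> {- int N..int N})) / real (2 * N + 1) \<le> c + real i / (2 * real N + 1)" for N
  proof -
    have pos: "real (2 * N + 1) > 0" by simp
    have "real (card (A \<inter> {- int N..int N})) / real (2 * N + 1)
        \<le> real i * (real (2 * N + 1) / real (2 * i + 3) + 1) / real (2 * N + 1)"
      using count_upper[OF i2 ind, of N] pos by (intro divide_right_mono) auto
    also have "\<dots> = c + real i / (2 * real N + 1)" unfolding c_def using pos
      by (simp add: field_simps)
    finally show ?thesis .
  qed
  have "upper_density A \<le> limsup (\<lambda>N. ereal (c + real i / (2 * real N + 1)))"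
    unfolding upper_density_def by (rule Limsup_mono) (use le in auto)
  also have "\<dots> = ereal c"
  proof (rule lim_imp_Limsup)
    show "((\<lambda>N. ereal (c + real i / (2 * real N + 1))) \<longlongrightarrow> ereal c) sequentially"
      by (rule tendsto_ereal) real_asymp
  qed simp
  finally show ?thesis unfolding c_def .
qed

lemma density_lower:
  assumes i2: "i \<ge> 2"
  shows "upper_density (Aset i) \<ge> ereal (real i / real (2 * i + 3))"
proof -
  define c where "c = real i / real (2 * i + 3)"
  define p where "p = real (2 * i + 3)"
  have le: "c * (2 * real N + 2 - 2 * p) / (2 * real N + 1) \<le> real (card (Aset i \<inter> {- int N..int N})) / real (2 * N + 1)" for N
  proof -
    have pos: "real (2 * N + 1) > 0" by simp
    have pp: "p > 0" unfolding p_def by simp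
    have "c * (2 * real N + 2 - 2 * p) / (2 * real N + 1) = 2 * real i * (real N - p + 1) / p / real (2 * N + 1)"
      unfolding c_def p_def using pos by (simp add: field_simps)
    also have "\<dots> \<le> real (card (Aset i \<inter> {- int N..int N})) / real (2 * N + 1)"
      using count_lower[OF i2, of N] pos unfolding p_def by (intro divide_right_mono) auto
    finally show ?thesis .
  qed
  have "ereal c = liminf (\<lambda>N. ereal (c * (2 * real N + 2 - 2 * p) / (2 * real N + 1)))"
  proof (rule sym, rule lim_imp_Liminf)
    show "((\<lambda>N. ereal (c * (2 * real N + 2 - 2 * p) / (2 * real N + 1))) \<longlongrightarrow> ereal c) sequentially"
      by (rule tendsto_ereal) real_asymp
  qed simp
  also have "\<dots> \<le> liminf (\<lambda>N. ereal (real (card (Aset i \<inter> {- int N..int N})) / real (2 * N + 1)))"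
    by (rule Liminf_mono) (use le in auto)
  also have "\<dots> \<le> upper_density (Aset i)"
    unfolding upper_density_def by (rule Liminf_le_Limsup) simp
  finally show ?thesis unfolding c_def .
qed

theorem theorem27:
  fixes i :: nat
  assumes "i \<ge> 2"
  shows "independence_ratio {1, 3, 2 * i} = ereal (real i / real (2 * i + 3))"
proof (rule antisym)
  show "independence_ratio {1, 3, 2 * i} \<le> ereal (real i / real (2 * i + 3))"
    unfolding independence_ratio_def
    by (rule SUP_least) (use density_upper[OF assms] in auto)
  show "ereal (real i / real (2 * i + 3)) \<le> independence_ratio {1, 3, 2 * i}"
    unfolding independence_ratio_def
    by (rule SUP_upper2[of "Aset i"]) (use Aset_indep density_lower[OF assms] in auto)
qed

end
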